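(* The following two statements are equivalent: (1) For all $n\ge1$, every infinite sequence of positive integers $x_1<x_2<\cdots$ with $x_{i+1}-x_i\le n$ for all $i$ contains a double 3-term arithmetic progression. (2) For all $n\ge1$ and all $m\in\mathbb{N}$, every infinite sequence of positive integers $x_1<x_2<\cdots$ with $x_{i+1}-x_i\le n$ for all $i$ contains a double 3-term arithmetic progression $x_i,x_j,x_k$ (with $i<j<k$) such that $j-i=k-j\ge m$.
   Context: An increasing sequence of positive integers $x_1<x_2<\cdots$ contains a double 3-term arithmetic progression $x_i,x_j,x_k$ if $i<j<k$, $i+k=2j$ and $x_i+x_k=2x_j$. *)

theory Defs
  imports Main
begin

text \<open>Sequences x_1 < x_2 < ... are represented as functions nat => nat indexed from 0
  (index shift is immaterial since only index differences matter).\<close>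

definition bounded_gap_seq :: "nat \<Rightarrow> (nat \<Rightarrow> nat) \<Rightarrow> bool" where
  "bounded_gap_seq n x \<longleftrightarrow> (\<forall>i. 0 < x i) \<and> strict_mono x \<and> (\<forall>i. x (Suc i) - x i \<le> n)"

definition double_3AP :: "(nat \<Rightarrow> nat) \<Rightarrow> nat \<Rightarrow> nat \<Rightarrow> nat \<Rightarrow> bool" where
  "double_3AP x i j k \<longleftrightarrow> i < j \<and> j < k \<and> i + k = 2 * j \<and> x i + x k = 2 * x j"

definition has_double_3AP :: "(nat \<Rightarrow> nat) \<Rightarrow> bool" where
  "has_double_3AP x \<longleftrightarrow> (\<exists>i j k. double_3AP x i j k)"

end

theory Submission
  imports Defs
begin

lemma gap_bound:
  assumes "bounded_gap_seq n x"
  shows "x (a + d) - x a \<le> d * n"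
proof (induction d)
  case 0 then show ?case by simp
next
  case (Suc d)
  have sm: "strict_mono x" using assms by (simp add: bounded_gap_seq_def)
  have g: "x (Suc (a + d)) - x (a + d) \<le> n" using assms by (simp add: bounded_gap_seq_def)
  have m1: "x a \<le> x (a + d)" using sm by (simp add: strict_mono_less_eq)
  have m2: "x (a + d) < x (Suc (a + d))" using sm by (simp add: strict_mono_less)
  show ?case using Suc.IH g m1 m2 by simp
qed

lemma sub_seq:
  assumes "bounded_gap_seq n x" and "M \<ge> 1"
  shows "bounded_gap_seq (M * n) (\<lambda>i. x (M * i))"
proof -
  have sm: "strict_mono x" using assms by (simp add: bounded_gap_seq_def)
  have "strict_mono (\<lambda>i. x (M * i))"
    unfolding strict_mono_def using sm assms(2) by (simp add: strict_mono_less)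
  moreover have "x (M * Suc i) - x (M * i) \<le> M * n" for i
    using gap_bound[OF assms(1), of "M * i" M] by (simp add: add.commute)
  ultimately show ?thesis using assms(1) by (simp add: bounded_gap_seq_def)
qed

theorem theorem5:
  shows "(\<forall>n\<ge>1. \<forall>x. bounded_gap_seq n x \<longrightarrow> has_double_3AP x)
     \<longleftrightarrow> (\<forall>n\<ge>1. \<forall>m::nat. \<forall>x. bounded_gap_seq n x \<longrightarrow>
            (\<exists>i j k. double_3AP x i j k \<and> j - i \<ge> m))"
proof
  assume H: "\<forall>n\<ge>1. \<forall>x. bounded_gap_seq n x \<longrightarrow> has_double_3AP x"
  show "\<forall>n\<ge>1. \<forall>m::nat. \<forall>x. bounded_gap_seq n x \<longrightarrow>
            (\<exists>i j k. double_3AP x i j k \<and> j - i \<ge> m)"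
  proof (intro allI impI)
    fix n m x assume n: "n \<ge> 1" and b: "bounded_gap_seq n x"
    define M where "M = Suc m"
    have "bounded_gap_seq (M * n) (\<lambda>i. x (M * i))" using sub_seq[OF b, of M] M_def by (simp del: mult_Suc)
    moreover have "M * n \<ge> 1" using n M_def by simp
    ultimately have "has_double_3AP (\<lambda>i. x (M * i))" using H by blast
    then obtain i j k where d: "double_3AP (\<lambda>i. x (M * i)) i j k"
      unfolding has_double_3AP_def by blast
    have "double_3AP x (M*i) (M*j) (M*k)"
    proof -
      have a: "i < j" "j < k" "i + k = 2 * j" "x (M*i) + x (M*k) = 2 * x (M*j)"
        using d unfolding double_3AP_def by auto
      have "M * i + M * k = 2 * (M * j)" using a(3)
        by (metis add_mult_distrib2 mult.left_commute)
      moreover have "M*i < M*j" "M*j < M*k" using a(1,2) M_def by (simp_all only: mult_less_mono2 zero_less_Suc)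
      ultimately show ?thesis using a(4) unfolding double_3AP_def by simp
    qed
    moreover have "M * j - M * i \<ge> m"
    proof -
      have "i < j" using d by (simp add: double_3AP_def)
      then have "M * j - M * i = M * (j - i)" by (simp add: diff_mult_distrib2)
      also have "\<dots> \<ge> M" using \<open>i<j\<close> by (simp add: Suc_leI)
      finally show ?thesis using M_def by simp
    qed
    ultimately show "\<exists>i j k. double_3AP x i j k \<and> j - i \<ge> m" by blast
  qed
next
  assume H: "\<forall>n\<ge>1. \<forall>m::nat. \<forall>x. bounded_gap_seq n x \<longrightarrow>
            (\<exists>i j k. double_3AP x i j k \<and> j - i \<ge> m)"
  show "\<forall>n\<ge>1. \<forall>x. bounded_gap_seq n x \<longrightarrow> has_double_3AP x"
    using H unfolding has_double_3AP_def by blast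
qed

end
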